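(* Let $\mathbf X=(X_t)_{t\in I}$ be an OPM process with orthogonal polynomial martingales $\{p_n(x;t)\}_{n\ge0}$ and let $\hat p(t)=E p_1^2(X_t;t)$. Suppose $\mathbf X$ is a harness, i.e. for all $s<t<u$ in $I$ there are real numbers $\hat A(s,t,u),\hat B(s,t,u),\hat C(s,t,u)$ with $$E(p_1(X_t;t)\mid\mathcal F_{s,u})=\hat A(s,t,u)p_1(X_s;s)+\hat B(s,t,u)p_1(X_u;u)+\hat C(s,t,u)\quad\text{a.s.}$$ Then for all $s<t<u$, $$\hat A(s,t,u)=\frac{\hat p(u)-\hat p(t)}{\hat p(u)-\hat p(s)},\qquad \hat B(s,t,u)=\frac{\hat p(t)-\hat p(s)}{\hat p(u)-\hat p(s)}.$$
   Context: $I$ is a segment of the real line; $\mathbf X$ is a real Markov process with all moments finite and infinite support of every $X_t$; $\mathcal F_{\le s}=\sigma(X_v:v\in I,v\le s)$ and $\mathcal F_{s,u}=\sigma(X_v:v\in I, v\notin(s,u))$. $\mathbf X$ is an OPM process if it is an MPR process (for every $n$ and $s\le t$, $E(X_t^n\mid\mathcal F_{\le s})$ is a polynomial of degree at most $n$ in $X_s$, with the non-degeneracy and continuity conditions of the MPR class) and there exist polynomials $p_n(x;t)$ of degree $n$ in $x$, $p_0=1$, with $E p_n(X_t;t)p_m(X_t;t)=\hat p_n(t)\delta_{n,m}$ and $E(p_n(X_t;t)\mid\mathcal F_{\le s})=p_n(X_s;s)$ a.s. for all $s\le t$. *)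

theory Defs
  imports "HOL-Probability.Probability" "HOL-Computational_Algebra.Polynomial"
begin

definition gen_alg :: "'a measure \<Rightarrow> (real \<Rightarrow> 'a \<Rightarrow> real) \<Rightarrow> real set \<Rightarrow> 'a measure" where
  "gen_alg M X V = sigma (space M) {X v -` B \<inter> space M | v B. v \<in> V \<and> B \<in> sets borel}"

definition F_le :: "'a measure \<Rightarrow> real set \<Rightarrow> (real \<Rightarrow> 'a \<Rightarrow> real) \<Rightarrow> real \<Rightarrow> 'a measure" where
  "F_le M I X s = gen_alg M X {v \<in> I. v \<le> s}"

definition F_out :: "'a measure \<Rightarrow> real set \<Rightarrow> (real \<Rightarrow> 'a \<Rightarrow> real) \<Rightarrow> real \<Rightarrow> real \<Rightarrow> 'a measure" where
  "F_out M I X s u = gen_alg M X {v \<in> I. v \<notin> {s<..<u}}"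

definition real_process :: "'a measure \<Rightarrow> real set \<Rightarrow> (real \<Rightarrow> 'a \<Rightarrow> real) \<Rightarrow> bool" where
  "real_process M I X \<longleftrightarrow> prob_space M \<and>
     (\<forall>t\<in>I. X t \<in> borel_measurable M \<and> (\<forall>n::nat. integrable M (\<lambda>\<omega>. X t \<omega> ^ n)) \<and>
        \<not> (\<exists>S. finite S \<and> measure M {\<omega> \<in> space M. X t \<omega> \<in> S} = 1))"

definition markov_process :: "'a measure \<Rightarrow> real set \<Rightarrow> (real \<Rightarrow> 'a \<Rightarrow> real) \<Rightarrow> bool" where
  "markov_process M I X \<longleftrightarrow> real_process M I X \<and>
     (\<forall>s\<in>I. \<forall>t\<in>I. s \<le> t \<longrightarrow> (\<forall>B\<in>sets borel.
        AE \<omega> in M. real_cond_exp M (F_le M I X s) (\<lambda>\<omega>. indicator B (X t \<omega>)) \<omega>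
                  = real_cond_exp M (gen_alg M X {s}) (\<lambda>\<omega>. indicator B (X t \<omega>)) \<omega>))"

definition MPR :: "'a measure \<Rightarrow> real set \<Rightarrow> (real \<Rightarrow> 'a \<Rightarrow> real) \<Rightarrow> bool" where
  "MPR M I X \<longleftrightarrow> markov_process M I X \<and>
     (\<forall>n::nat. \<forall>s\<in>I. \<forall>t\<in>I. s \<le> t \<longrightarrow>
        (\<exists>q::real poly. degree q \<le> n \<and>
           (AE \<omega> in M. real_cond_exp M (F_le M I X s) (\<lambda>\<omega>. X t \<omega> ^ n) \<omega> = poly q (X s \<omega>)))) \<and>
     (\<forall>s\<in>I. \<forall>t\<in>I. s < t \<longrightarrow>
        (\<integral>\<omega>. (X t \<omega> - real_cond_exp M (F_le M I X s) (X t) \<omega>)\<^sup>2 \<partial>M) > 0) \<and>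
     (\<forall>n::nat. continuous_on I (\<lambda>t. \<integral>\<omega>. X t \<omega> ^ n \<partial>M))"

definition OPM :: "'a measure \<Rightarrow> real set \<Rightarrow> (real \<Rightarrow> 'a \<Rightarrow> real) \<Rightarrow> (nat \<Rightarrow> real \<Rightarrow> real poly) \<Rightarrow> bool" where
  "OPM M I X p \<longleftrightarrow> MPR M I X \<and>
     (\<forall>t\<in>I. p 0 t = 1 \<and> (\<forall>n. degree (p n t) = n)) \<and>
     (\<exists>phat :: nat \<Rightarrow> real \<Rightarrow> real. \<forall>t\<in>I. \<forall>n m.
        (\<integral>\<omega>. poly (p n t) (X t \<omega>) * poly (p m t) (X t \<omega>) \<partial>M) = (if n = m then phat n t else 0)) \<and>
     (\<forall>n. \<forall>s\<in>I. \<forall>t\<in>I. s \<le> t \<longrightarrow>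
        (AE \<omega> in M. real_cond_exp M (F_le M I X s) (\<lambda>\<omega>. poly (p n t) (X t \<omega>)) \<omega> = poly (p n s) (X s \<omega>)))"

end

theory Submission
  imports Defs
begin


lemma gen_alg_space: "space (gen_alg M X V) = space M"
  unfolding gen_alg_def by (rule space_measure_of) auto

lemma gen_alg_sets: "sets (gen_alg M X V) = sigma_sets (space M) {X v -` B \<inter> space M | v B. v \<in> V \<and> B \<in> sets borel}"
  unfolding gen_alg_def by (rule sets_measure_of) auto

lemma gen_alg_subalg:
  assumes "\<And>v. v \<in> V \<Longrightarrow> X v \<in> borel_measurable M"
  shows "subalgebra M (gen_alg M X V)"
  unfolding subalgebra_def
proof
  show "sets (gen_alg M X V) \<subseteq> sets M"
    unfolding gen_alg_sets
  proof (rule sets.sigma_sets_subset)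
    show "{X v -` B \<inter> space M | v B. v \<in> V \<and> B \<in> sets borel} \<subseteq> sets M"
      using assms measurable_sets by blast
  qed
  show "space (gen_alg M X V) = space M" by (rule gen_alg_space)
qed

lemma gen_alg_meas:
  assumes "v \<in> V"
  shows "X v \<in> borel_measurable (gen_alg M X V)"
proof (rule measurableI)
  fix x assume "x \<in> space (gen_alg M X V)" then show "X v x \<in> space borel" by simp
next
  fix B :: "real set" assume "B \<in> sets borel"
  then have "X v -` B \<inter> space M \<in> {X v -` B \<inter> space M | v B. v \<in> V \<and> B \<in> sets borel}"
    using assms by blast
  then show "X v -` B \<inter> space (gen_alg M X V) \<in> sets (gen_alg M X V)"
    unfolding gen_alg_sets gen_alg_space by (rule sigma_sets.Basic)
qed

lemma gen_alg_sfs: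
  assumes "prob_space M" "\<And>v. v \<in> V \<Longrightarrow> X v \<in> borel_measurable M"
  shows "sigma_finite_subalgebra M (gen_alg M X V)"
  apply (rule finite_measure_subalgebra_is_sigma_finite)
  unfolding finite_measure_subalgebra_def finite_measure_subalgebra_axioms_def
  using assms gen_alg_subalg prob_space.finite_measure by blast

lemma poly_meas:
  fixes f :: "'a \<Rightarrow> real"
  assumes "f \<in> borel_measurable N"
  shows "(\<lambda>x. poly P (f x)) \<in> borel_measurable N"
proof -
  have e: "(\<lambda>x. poly P (f x)) = (\<lambda>x. \<Sum>i\<le>degree P. coeff P i * f x ^ i)"
    by (simp add: poly_altdef)
  show ?thesis unfolding e using assms by measurable
qed

lemma poly_int:
  fixes f :: "'a \<Rightarrow> real"
  assumes "\<And>n::nat. integrable M (\<lambda>\<omega>. f \<omega> ^ n)"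
  shows "integrable M (\<lambda>\<omega>. poly P (f \<omega>))"
proof -
  have e: "(\<lambda>x. poly P (f x)) = (\<lambda>x. \<Sum>i\<le>degree P. coeff P i * f x ^ i)"
    by (simp add: poly_altdef)
  show ?thesis unfolding e using assms by (intro Bochner_Integration.integrable_sum integrable_mult_right) auto
qed

lemma poly_prod_int:
  fixes f g :: "'a \<Rightarrow> real"
  assumes "\<And>n::nat. integrable M (\<lambda>\<omega>. f \<omega> ^ n)" "\<And>n::nat. integrable M (\<lambda>\<omega>. g \<omega> ^ n)"
  shows "integrable M (\<lambda>\<omega>. poly P (f \<omega>) * poly Q (g \<omega>))"
proof (rule Bochner_Integration.integrable_bound)
  show "integrable M (\<lambda>\<omega>. poly (P*P) (f \<omega>) + poly (Q*Q) (g \<omega>))"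
    using assms by (intro Bochner_Integration.integrable_add poly_int) auto
  show "(\<lambda>\<omega>. poly P (f \<omega>) * poly Q (g \<omega>)) \<in> borel_measurable M"
    using assms poly_int[of M f P] poly_int[of M g Q] by measurable
  show "AE x in M. norm (poly P (f x) * poly Q (g x)) \<le> norm (poly (P*P) (f x) + poly (Q*Q) (g x))"
  proof (rule AE_I2)
    fix x
    have "\<bar>poly P (f x) * poly Q (g x)\<bar> \<le> poly P (f x) ^ 2 + poly Q (g x) ^ 2"
    proof -
      have "2 * \<bar>poly P (f x)\<bar> * \<bar>poly Q (g x)\<bar> \<le> \<bar>poly P (f x)\<bar>^2 + \<bar>poly Q (g x)\<bar>^2"
        by (rule sum_squares_bound)
      moreover have "0 \<le> \<bar>poly P (f x)\<bar> * \<bar>poly Q (g x)\<bar>" by simp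
      ultimately have "\<bar>poly P (f x)\<bar> * \<bar>poly Q (g x)\<bar> \<le> \<bar>poly P (f x)\<bar>^2 + \<bar>poly Q (g x)\<bar>^2"
        by linarith
      then show ?thesis by (simp add: abs_mult)
    qed
    then show "norm (poly P (f x) * poly Q (g x)) \<le> norm (poly (P*P) (f x) + poly (Q*Q) (g x))"
      by (simp add: power2_eq_square)
  qed
qed

lemma ce_prod:
  assumes "sigma_finite_subalgebra M F" "f \<in> borel_measurable F" "g \<in> borel_measurable M"
    "integrable M (\<lambda>x. f x * g x)" "AE x in M. real_cond_exp M F g x = h x"
    "h \<in> borel_measurable M"
  shows "(\<integral>x. f x * g x \<partial>M) = (\<integral>x. f x * h x \<partial>M)"
proof -
  interpret sigma_finite_subalgebra M F by fact
  have fm: "f \<in> borel_measurable M" using measurable_from_subalg[OF subalg assms(2)] .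
  have "(\<integral>x. f x * g x \<partial>M) = (\<integral>x. f x * real_cond_exp M F g x \<partial>M)"
    using real_cond_exp_intg(2)[OF assms(4,2,3)] by simp
  also have "\<dots> = (\<integral>x. f x * h x \<partial>M)"
    apply (rule integral_cong_AE)
    using fm assms(6) measurable_from_subalg[OF subalg borel_measurable_cond_exp] assms(5)
    by (auto elim!: AE_mp)
  finally show ?thesis .
qed


lemma lin3:
  fixes f a b :: "'a \<Rightarrow> real"
  assumes "integrable M (\<lambda>x. f x * a x)" "integrable M (\<lambda>x. f x * b x)" "integrable M f"
  shows "(\<integral>x. f x * (A * a x + B * b x + C) \<partial>M) = A * (\<integral>x. f x * a x \<partial>M) + B * (\<integral>x. f x * b x \<partial>M) + C * (\<integral>x. f x \<partial>M)"
proof -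
  have e: "(\<lambda>x. f x * (A * a x + B * b x + C)) = (\<lambda>x. A * (f x * a x) + B * (f x * b x) + C * f x)"
    by (auto simp: algebra_simps)
  show ?thesis unfolding e using assms by simp
qed

lemma deg1_poly:
  fixes P :: "real poly"
  assumes "degree P = 1"
  shows "poly P x = coeff P 0 + coeff P 1 * x" "coeff P 1 \<noteq> 0"
proof -
  show "poly P x = coeff P 0 + coeff P 1 * x" by (simp add: poly_altdef assms)
  have "P \<noteq> 0" using assms by auto
  then show "coeff P 1 \<noteq> 0" using leading_coeff_neq_0[of P] assms by simp
qed

theorem lemma1:
  fixes M :: "'a measure" and I :: "real set" and X :: "real \<Rightarrow> 'a \<Rightarrow> real"
    and p :: "nat \<Rightarrow> real \<Rightarrow> real poly"
    and A B C :: "real \<Rightarrow> real \<Rightarrow> real \<Rightarrow> real"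
    and phat :: "real \<Rightarrow> real"
  assumes "is_interval I"
    and "OPM M I X p"
    and phat_def: "\<And>t. phat t = (\<integral>\<omega>. (poly (p 1 t) (X t \<omega>))\<^sup>2 \<partial>M)"
    and harness: "\<And>s t u. s \<in> I \<Longrightarrow> t \<in> I \<Longrightarrow> u \<in> I \<Longrightarrow> s < t \<Longrightarrow> t < u \<Longrightarrow>
        AE \<omega> in M. real_cond_exp M (F_out M I X s u) (\<lambda>\<omega>. poly (p 1 t) (X t \<omega>)) \<omega>
          = A s t u * poly (p 1 s) (X s \<omega>) + B s t u * poly (p 1 u) (X u \<omega>) + C s t u"
  shows "\<forall>s\<in>I. \<forall>t\<in>I. \<forall>u\<in>I. s < t \<and> t < u \<longrightarrow>
           A s t u = (phat u - phat t) / (phat u - phat s) \<and>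
           B s t u = (phat t - phat s) / (phat u - phat s)"
proof -
  have opm: "MPR M I X" "\<forall>t\<in>I. p 0 t = 1 \<and> (\<forall>n. degree (p n t) = n)"
    "\<exists>phat :: nat \<Rightarrow> real \<Rightarrow> real. \<forall>t\<in>I. \<forall>n m.
        (\<integral>\<omega>. poly (p n t) (X t \<omega>) * poly (p m t) (X t \<omega>) \<partial>M) = (if n = m then phat n t else 0)"
    "\<forall>n. \<forall>s\<in>I. \<forall>t\<in>I. s \<le> t \<longrightarrow>
        (AE \<omega> in M. real_cond_exp M (F_le M I X s) (\<lambda>\<omega>. poly (p n t) (X t \<omega>)) \<omega> = poly (p n s) (X s \<omega>))"
    using assms(2) unfolding OPM_def by auto
  obtain ph where orth: "\<And>t n m. t \<in> I \<Longrightarrow>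
        (\<integral>\<omega>. poly (p n t) (X t \<omega>) * poly (p m t) (X t \<omega>) \<partial>M) = (if n = m then ph n t else 0)"
    using opm(3) by blast
  have mpr: "markov_process M I X" "\<forall>s\<in>I. \<forall>t\<in>I. s < t \<longrightarrow>
        (\<integral>\<omega>. (X t \<omega> - real_cond_exp M (F_le M I X s) (X t) \<omega>)\<^sup>2 \<partial>M) > 0"
    using opm(1) unfolding MPR_def by auto
  have rp: "prob_space M" "\<And>t. t \<in> I \<Longrightarrow> X t \<in> borel_measurable M"
    "\<And>t n. t \<in> I \<Longrightarrow> integrable M (\<lambda>\<omega>. X t \<omega> ^ n)"
    "\<And>t. t \<in> I \<Longrightarrow> \<not> (\<exists>S. finite S \<and> measure M {\<omega> \<in> space M. X t \<omega> \<in> S} = 1)"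
    using mpr(1) unfolding markov_process_def real_process_def by auto
  interpret prob_space M by (rule rp(1))
  define q where "q = (\<lambda>t \<omega>. poly (p 1 t) (X t \<omega>))"
  have deg: "\<And>t. t \<in> I \<Longrightarrow> degree (p 1 t) = 1" using opm(2) by auto
  have qint: "\<And>t. t \<in> I \<Longrightarrow> integrable M (q t)"
    unfolding q_def using rp(3) by (intro poly_int) auto
  have qqint: "\<And>s t. s \<in> I \<Longrightarrow> t \<in> I \<Longrightarrow> integrable M (\<lambda>\<omega>. q s \<omega> * q t \<omega>)"
    unfolding q_def using rp(3) by (intro poly_prod_int) auto
  have qmeas: "\<And>t. t \<in> I \<Longrightarrow> q t \<in> borel_measurable M"
    using qint by auto
  have sfle: "\<And>s. sigma_finite_subalgebra M (F_le M I X s)"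
    unfolding F_le_def using rp by (intro gen_alg_sfs) auto
  have sfout: "\<And>s u. sigma_finite_subalgebra M (F_out M I X s u)"
    unfolding F_out_def using rp by (intro gen_alg_sfs) auto
  have E0: "\<And>t. t \<in> I \<Longrightarrow> (\<integral>\<omega>. q t \<omega> \<partial>M) = 0"
  proof -
    fix t assume t: "t \<in> I"
    have "(\<integral>\<omega>. poly (p 1 t) (X t \<omega>) * poly (p 0 t) (X t \<omega>) \<partial>M) = 0"
      using orth[OF t, of 1 0] by simp
    then show "(\<integral>\<omega>. q t \<omega> \<partial>M) = 0" using opm(2) t by (simp add: q_def)
  qed
  have phq: "\<And>t. phat t = (\<integral>\<omega>. q t \<omega> * q t \<omega> \<partial>M)"
    by (simp add: phat_def q_def power2_eq_square)
  have MG: "\<And>s t. s \<in> I \<Longrightarrow> t \<in> I \<Longrightarrow> s \<le> t \<Longrightarrow> (\<integral>\<omega>. q s \<omega> * q t \<omega> \<partial>M) = phat s"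
  proof -
    fix s t assume st: "s \<in> I" "t \<in> I" "s \<le> t"
    have "(\<integral>\<omega>. q s \<omega> * q t \<omega> \<partial>M) = (\<integral>\<omega>. q s \<omega> * q s \<omega> \<partial>M)"
    proof (rule ce_prod[OF sfle])
      show "q s \<in> borel_measurable (F_le M I X s)"
        unfolding q_def F_le_def using st by (intro poly_meas gen_alg_meas) auto
      show "q t \<in> borel_measurable M" using qmeas st by auto
      show "integrable M (\<lambda>\<omega>. q s \<omega> * q t \<omega>)" using qqint st by auto
      show "AE x in M. real_cond_exp M (F_le M I X s) (q t) x = q s x"
        using opm(4) st unfolding q_def by auto
      show "q s \<in> borel_measurable M" using qmeas st by auto
    qed
    then show "(\<integral>\<omega>. q s \<omega> * q t \<omega> \<partial>M) = phat s" using phq by simp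
  qed
  have HN: "\<And>s t u f. s \<in> I \<Longrightarrow> t \<in> I \<Longrightarrow> u \<in> I \<Longrightarrow> s < t \<Longrightarrow> t < u \<Longrightarrow>
      f \<in> borel_measurable (F_out M I X s u) \<Longrightarrow> integrable M (\<lambda>\<omega>. f \<omega> * q t \<omega>) \<Longrightarrow>
      integrable M (\<lambda>\<omega>. f \<omega> * q s \<omega>) \<Longrightarrow> integrable M (\<lambda>\<omega>. f \<omega> * q u \<omega>) \<Longrightarrow> integrable M f \<Longrightarrow>
      (\<integral>\<omega>. f \<omega> * q t \<omega> \<partial>M) = A s t u * (\<integral>\<omega>. f \<omega> * q s \<omega> \<partial>M) + B s t u * (\<integral>\<omega>. f \<omega> * q u \<omega> \<partial>M)
         + C s t u * (\<integral>\<omega>. f \<omega> \<partial>M)"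
  proof -
    fix s t u and f :: "'a \<Rightarrow> real"
    assume a: "s \<in> I" "t \<in> I" "u \<in> I" "s < t" "t < u" "f \<in> borel_measurable (F_out M I X s u)"
      "integrable M (\<lambda>\<omega>. f \<omega> * q t \<omega>)" "integrable M (\<lambda>\<omega>. f \<omega> * q s \<omega>)"
      "integrable M (\<lambda>\<omega>. f \<omega> * q u \<omega>)" "integrable M f"
    have "(\<integral>\<omega>. f \<omega> * q t \<omega> \<partial>M) = (\<integral>\<omega>. f \<omega> * (A s t u * q s \<omega> + B s t u * q u \<omega> + C s t u) \<partial>M)"
    proof (rule ce_prod[OF sfout a(6)])
      show "q t \<in> borel_measurable M" using qmeas a by auto
      show "integrable M (\<lambda>\<omega>. f \<omega> * q t \<omega>)" using a by auto
      show "AE x in M. real_cond_exp M (F_out M I X s u) (q t) x = A s t u * q s x + B s t u * q u x + C s t u"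
        using harness[OF a(1-5)] unfolding q_def by auto
      show "(\<lambda>x. A s t u * q s x + B s t u * q u x + C s t u) \<in> borel_measurable M"
        using qmeas a by measurable
    qed
    also have "\<dots> = A s t u * (\<integral>\<omega>. f \<omega> * q s \<omega> \<partial>M) + B s t u * (\<integral>\<omega>. f \<omega> * q u \<omega> \<partial>M)
         + C s t u * (\<integral>\<omega>. f \<omega> \<partial>M)"
      using a by (intro lin3) auto
    finally show "(\<integral>\<omega>. f \<omega> * q t \<omega> \<partial>M) = A s t u * (\<integral>\<omega>. f \<omega> * q s \<omega> \<partial>M) + B s t u * (\<integral>\<omega>. f \<omega> * q u \<omega> \<partial>M)
         + C s t u * (\<integral>\<omega>. f \<omega> \<partial>M)" .
  qed
  have pos: "\<And>s. s \<in> I \<Longrightarrow> phat s > 0"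
  proof -
    fix s assume s: "s \<in> I"
    have ge: "phat s \<ge> 0" unfolding phat_def by simp
    show "phat s > 0"
    proof (rule ccontr)
      assume "\<not> phat s > 0"
      then have "phat s = 0" using ge by simp
      then have "(\<integral>\<omega>. (q s \<omega>)\<^sup>2 \<partial>M) = 0" by (simp add: phat_def q_def)
      moreover have "integrable M (\<lambda>\<omega>. (q s \<omega>)\<^sup>2)" using qqint[OF s s] by (simp add: power2_eq_square)
      ultimately have "AE \<omega> in M. (q s \<omega>)\<^sup>2 = 0"
        using integral_nonneg_eq_0_iff_AE[of M "\<lambda>\<omega>. (q s \<omega>)\<^sup>2"] by simp
      then have ae: "AE \<omega> in M. X s \<omega> \<in> {- coeff (p 1 s) 0 / coeff (p 1 s) 1}"
      proof (rule AE_mp, intro AE_I2 impI)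
        fix \<omega> assume "(q s \<omega>)\<^sup>2 = 0"
        then have "coeff (p 1 s) 0 + coeff (p 1 s) 1 * X s \<omega> = 0"
          using deg1_poly[OF deg[OF s]] by (simp add: q_def)
        then show "X s \<omega> \<in> {- coeff (p 1 s) 0 / coeff (p 1 s) 1}"
          using deg1_poly(2)[OF deg[OF s]] by (simp add: field_simps)
      qed
      have ms: "{\<omega> \<in> space M. X s \<omega> \<in> {- coeff (p 1 s) 0 / coeff (p 1 s) 1}} \<in> sets M"
        using rp(2)[OF s] by measurable
      have "measure M {\<omega> \<in> space M. X s \<omega> \<in> {- coeff (p 1 s) 0 / coeff (p 1 s) 1}} = 1"
        by (rule iffD2[OF prob_Collect_eq_1[OF ms] ae])
      then show False using rp(4)[OF s] by blast
    qed
  qed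
  have incr: "\<And>s u. s \<in> I \<Longrightarrow> u \<in> I \<Longrightarrow> s < u \<Longrightarrow> phat u - phat s > 0"
  proof -
    fix s u assume su: "s \<in> I" "u \<in> I" "s < u"
    define F where "F = F_le M I X s"
    define a where "a = coeff (p 1 u) 1"
    define b where "b = coeff (p 1 u) 0"
    have a0: "a \<noteq> 0" unfolding a_def using deg1_poly(2)[OF deg[OF su(2)]] .
    have qu: "q u = (\<lambda>\<omega>. b + a * X u \<omega>)"
      unfolding q_def a_def b_def using deg1_poly(1)[OF deg[OF su(2)]] by auto
    interpret sigma_finite_subalgebra M F unfolding F_def by (rule sfle)
    have Xi: "integrable M (X u)" using rp(3)[OF su(2), of 1] by simp
    have ae1: "AE \<omega> in M. real_cond_exp M F (q u) \<omega> = q s \<omega>"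
      using opm(4) su unfolding q_def F_def by auto
    have ae2: "AE \<omega> in M. real_cond_exp M F (q u) \<omega> = b + a * real_cond_exp M F (X u) \<omega>"
    proof -
      have "AE \<omega> in M. real_cond_exp M F (\<lambda>\<omega>. b + a * X u \<omega>) \<omega>
          = real_cond_exp M F (\<lambda>\<omega>. b) \<omega> + real_cond_exp M F (\<lambda>\<omega>. a * X u \<omega>) \<omega>"
        using Xi by (intro real_cond_exp_add) auto
      moreover have "AE \<omega> in M. real_cond_exp M F (\<lambda>\<omega>. b) \<omega> = b"
        by (intro real_cond_exp_F_meas) auto
      moreover have "AE \<omega> in M. real_cond_exp M F (\<lambda>\<omega>. a * X u \<omega>) \<omega> = a * real_cond_exp M F (X u) \<omega>"
        using Xi by (intro real_cond_exp_cmult)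
      ultimately show ?thesis unfolding qu by eventually_elim auto
    qed
    have ae3: "AE \<omega> in M. (X u \<omega> - real_cond_exp M F (X u) \<omega>)\<^sup>2 = ((q u \<omega> - q s \<omega>) / a)\<^sup>2"
      using ae1 ae2
    proof eventually_elim
      case (elim \<omega>)
      then have "X u \<omega> - real_cond_exp M F (X u) \<omega> = (q u \<omega> - q s \<omega>) / a"
        using a0 unfolding qu by (simp add: field_simps)
      then show ?case by simp
    qed
    have cem: "real_cond_exp M F (X u) \<in> borel_measurable M"
      using measurable_from_subalg[OF subalg borel_measurable_cond_exp] .
    have "0 < (\<integral>\<omega>. (X u \<omega> - real_cond_exp M F (X u) \<omega>)\<^sup>2 \<partial>M)"
      using mpr(2) su unfolding F_def by auto
    also have "\<dots> = (\<integral>\<omega>. ((q u \<omega> - q s \<omega>) / a)\<^sup>2 \<partial>M)"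
      using ae3 cem rp(2)[OF su(2)] qmeas su by (intro integral_cong_AE) auto
    also have "\<dots> = (\<integral>\<omega>. (q u \<omega> * q u \<omega> - 2 * (q s \<omega> * q u \<omega>) + q s \<omega> * q s \<omega>) / a\<^sup>2 \<partial>M)"
      by (intro Bochner_Integration.integral_cong) (auto simp: power_divide power2_eq_square algebra_simps)
    also have "\<dots> = ((\<integral>\<omega>. q u \<omega> * q u \<omega> \<partial>M) - 2 * (\<integral>\<omega>. q s \<omega> * q u \<omega> \<partial>M) + (\<integral>\<omega>. q s \<omega> * q s \<omega> \<partial>M)) / a\<^sup>2"
      using qqint su by simp
    also have "\<dots> = (phat u - phat s) / a\<^sup>2"
      using phq[symmetric] MG[OF su(1,2)] su by simp
    finally show "phat u - phat s > 0" using a0 by (simp add: zero_less_divide_iff)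
  qed
  show ?thesis
  proof (intro ballI impI)
    fix s t u assume st: "s \<in> I" "t \<in> I" "u \<in> I" "s < t \<and> t < u"
    have ms: "q s \<in> borel_measurable (F_out M I X s u)"
      unfolding q_def F_out_def using st by (intro poly_meas gen_alg_meas) auto
    have mu: "q u \<in> borel_measurable (F_out M I X s u)"
      unfolding q_def F_out_def using st by (intro poly_meas gen_alg_meas) auto
    have e1: "(\<integral>\<omega>. (\<lambda>_. 1) \<omega> * q t \<omega> \<partial>M) = A s t u * (\<integral>\<omega>. (\<lambda>_. 1) \<omega> * q s \<omega> \<partial>M)
        + B s t u * (\<integral>\<omega>. (\<lambda>_. 1) \<omega> * q u \<omega> \<partial>M) + C s t u * (\<integral>\<omega>. (\<lambda>_. 1::real) \<omega> \<partial>M)"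
      using st qint by (intro HN) auto
    then have C0: "C s t u = 0" using E0 st by (simp add: prob_space)
    have e2: "(\<integral>\<omega>. q s \<omega> * q t \<omega> \<partial>M) = A s t u * (\<integral>\<omega>. q s \<omega> * q s \<omega> \<partial>M)
        + B s t u * (\<integral>\<omega>. q s \<omega> * q u \<omega> \<partial>M) + C s t u * (\<integral>\<omega>. q s \<omega> \<partial>M)"
      using st qint qqint ms by (intro HN) auto
    then have eq2: "phat s = A s t u * phat s + B s t u * phat s"
      using MG st E0 phq[symmetric] C0 by simp
    have e3: "(\<integral>\<omega>. q u \<omega> * q t \<omega> \<partial>M) = A s t u * (\<integral>\<omega>. q u \<omega> * q s \<omega> \<partial>M)
        + B s t u * (\<integral>\<omega>. q u \<omega> * q u \<omega> \<partial>M) + C s t u * (\<integral>\<omega>. q u \<omega> \<partial>M)"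
      using st qint qqint mu by (intro HN) auto
    moreover have "(\<integral>\<omega>. q u \<omega> * q t \<omega> \<partial>M) = phat t"
      using MG[of t u] st by (simp add: mult.commute)
    moreover have "(\<integral>\<omega>. q u \<omega> * q s \<omega> \<partial>M) = phat s"
      using MG[of s u] st by (simp add: mult.commute)
    ultimately have eq3: "phat t = A s t u * phat s + B s t u * phat u"
      using phq[symmetric] C0 by simp
    have ps: "phat s > 0" using pos st by auto
    have d: "phat u - phat s > 0" using incr st by auto
    have "phat s * (A s t u + B s t u - 1) = 0" using eq2 by (simp add: algebra_simps)
    then have AB: "A s t u = 1 - B s t u" using ps by simp
    have "phat t - phat s = B s t u * (phat u - phat s)" using eq3 unfolding AB by (simp add: algebra_simps)
    then have Bv: "B s t u = (phat t - phat s) / (phat u - phat s)"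
      using d by (simp add: field_simps)
    have Av: "A s t u = (phat u - phat t) / (phat u - phat s)"
    proof -
      have "A s t u = 1 - (phat t - phat s) / (phat u - phat s)" using AB Bv by simp
      also have "\<dots> = (phat u - phat t) / (phat u - phat s)" using d by (simp add: field_simps)
      finally show ?thesis .
    qed
    show "A s t u = (phat u - phat t) / (phat u - phat s) \<and>
           B s t u = (phat t - phat s) / (phat u - phat s)" using Av Bv by simp
  qed
qed

end
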